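(* $\left\|\begin{bmatrix}0&0&0&1\\0&1&1&1\\0&1&0&0\\1&1&0&0\end{bmatrix}\right\|_\bullet>\left\|\begin{bmatrix}1&1&0&0\\0&1&1&0\\0&0&1&1\\0&0&0&1\end{bmatrix}\right\|_\bullet$.
   Context: Fix $\mathbb F\in\{\mathbb R,\mathbb C\}$. For an $m\times n$ matrix $A$, the Schur norm is $\|A\|_\bullet=\sup\{\|A\bullet X\|: X\in M_{m,n}(\mathbb F),\ \|X\|\le1\}$, where $A\bullet X=[a_{ij}x_{ij}]$ is the entrywise product and $\|\cdot\|$ is the operator norm $\ell^2_n\to\ell^2_m$. *)

theory Defs
  imports Complex_Main
begin

text \<open>Matrices are represented as functions nat => nat => 'a, with the size
(m rows, n columns) passed explicitly; only entries with i < m, j < n matter.\<close>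

definition vec_norm2 :: "nat \<Rightarrow> (nat \<Rightarrow> 'a::real_normed_field) \<Rightarrow> real" where
  "vec_norm2 n v = sqrt (\<Sum>j<n. (norm (v j))^2)"

definition op_norm :: "nat \<Rightarrow> nat \<Rightarrow> (nat \<Rightarrow> nat \<Rightarrow> 'a::real_normed_field) \<Rightarrow> real" where
  "op_norm m n X = Sup {vec_norm2 m (\<lambda>i. \<Sum>j<n. X i j * v j) | v. vec_norm2 n v \<le> 1}"

definition schur_norm :: "nat \<Rightarrow> nat \<Rightarrow> (nat \<Rightarrow> nat \<Rightarrow> 'a::real_normed_field) \<Rightarrow> real" where
  "schur_norm m n A = Sup {op_norm m n (\<lambda>i j. A i j * X i j) | X. op_norm m n X \<le> 1}"

definition mat_of_rows :: "'a list list \<Rightarrow> nat \<Rightarrow> nat \<Rightarrow> 'a" where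
  "mat_of_rows rs i j = rs ! i ! j"

end

theory Submission
  imports Defs "HOL-Analysis.Analysis"
begin


lemma vn_nonneg: "vec_norm2 n v \<ge> 0"
  unfolding vec_norm2_def by (intro real_sqrt_ge_zero sum_nonneg) auto

lemma vn_sq: "(vec_norm2 n v)^2 = (\<Sum>j<n. (norm (v j))^2)"
  unfolding vec_norm2_def by (intro real_sqrt_pow2 sum_nonneg) auto

lemma vn_scale: "vec_norm2 n (\<lambda>j. c * v j) = norm c * vec_norm2 n v"
proof -
  have "(\<Sum>j<n. (norm (c * v j))^2) = (norm c)^2 * (\<Sum>j<n. (norm (v j))^2)"
    by (simp add: sum_distrib_left norm_mult power_mult_distrib)
  then show ?thesis unfolding vec_norm2_def by (simp add: real_sqrt_mult)
qed

lemma vn_le_sq: assumes "(\<Sum>j<m. (norm (u j))^2) \<le> c^2 * (\<Sum>j<n. (norm (v j))^2)" "c \<ge> 0"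
  shows "vec_norm2 m u \<le> c * vec_norm2 n v"
proof -
  have "vec_norm2 m u \<le> sqrt (c^2 * (\<Sum>j<n. (norm (v j))^2))"
    unfolding vec_norm2_def using assms(1) by (rule real_sqrt_le_mono)
  also have "\<dots> = c * vec_norm2 n v" using assms(2) unfolding vec_norm2_def by (simp add: real_sqrt_mult)
  finally show ?thesis .
qed

lemma CSN: fixes x y :: "'b \<Rightarrow> 'a::real_normed_field"
  shows "(norm (\<Sum>k\<in>I. x k * y k))^2 \<le> (\<Sum>k\<in>I. (norm (x k))^2) * (\<Sum>k\<in>I. (norm (y k))^2)"
proof -
  have "norm (\<Sum>k\<in>I. x k * y k) \<le> (\<Sum>k\<in>I. norm (x k) * norm (y k))"
    by (metis (no_types, lifting) norm_mult norm_sum sum.cong)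
  then have "(norm (\<Sum>k\<in>I. x k * y k))^2 \<le> (\<Sum>k\<in>I. norm (x k) * norm (y k))^2"
    by (intro power_mono) auto
  also have "\<dots> \<le> (\<Sum>k\<in>I. (norm (x k))^2) * (\<Sum>k\<in>I. (norm (y k))^2)"
    by (rule Cauchy_Schwarz_ineq_sum)
  finally show ?thesis .
qed

lemma op_bound: fixes X :: "nat \<Rightarrow> nat \<Rightarrow> 'a::real_normed_field"
  shows "vec_norm2 m (\<lambda>i. \<Sum>j<n. X i j * v j) \<le> sqrt (\<Sum>i<m. \<Sum>j<n. (norm (X i j))^2) * vec_norm2 n v"
proof (rule vn_le_sq)
  have "(\<Sum>i<m. (norm (\<Sum>j<n. X i j * v j))^2) \<le> (\<Sum>i<m. (\<Sum>j<n. (norm (X i j))^2) * (\<Sum>j<n. (norm (v j))^2))"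
    by (intro sum_mono CSN)
  then show "(\<Sum>i<m. (norm (\<Sum>j<n. X i j * v j))^2) \<le> (sqrt (\<Sum>i<m. \<Sum>j<n. (norm (X i j))^2))^2 * (\<Sum>j<n. (norm (v j))^2)"
    by (simp add: sum_distrib_right sum_nonneg)
qed (intro real_sqrt_ge_zero sum_nonneg, auto)

lemma op_bdd: fixes X :: "nat \<Rightarrow> nat \<Rightarrow> 'a::real_normed_field"
  shows "bdd_above {vec_norm2 m (\<lambda>i. \<Sum>j<n. X i j * v j) | v. vec_norm2 n v \<le> 1}"
proof (rule bdd_aboveI, clarify)
  fix v :: "nat \<Rightarrow> 'a" assume "vec_norm2 n v \<le> 1"
  have "vec_norm2 m (\<lambda>i. \<Sum>j<n. X i j * v j) \<le> sqrt (\<Sum>i<m. \<Sum>j<n. (norm (X i j))^2) * vec_norm2 n v"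
    by (rule op_bound)
  also have "\<dots> \<le> sqrt (\<Sum>i<m. \<Sum>j<n. (norm (X i j))^2) * 1"
    using \<open>vec_norm2 n v \<le> 1\<close> by (intro mult_left_mono real_sqrt_ge_zero sum_nonneg) auto
  finally show "vec_norm2 m (\<lambda>i. \<Sum>j<n. X i j * v j) \<le> sqrt (\<Sum>i<m. \<Sum>j<n. (norm (X i j))^2)" by simp
qed

lemma op_ge: fixes X :: "nat \<Rightarrow> nat \<Rightarrow> 'a::real_normed_field"
  assumes "vec_norm2 n v \<le> 1" shows "vec_norm2 m (\<lambda>i. \<Sum>j<n. X i j * v j) \<le> op_norm m n X"
  unfolding op_norm_def by (rule cSup_upper) (use assms op_bdd in auto)

lemma vn_zero: "vec_norm2 n (\<lambda>j. 0::'a::real_normed_field) = 0"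
  unfolding vec_norm2_def by simp

lemma op_nonneg: "op_norm m n (X :: nat \<Rightarrow> nat \<Rightarrow> 'a::real_normed_field) \<ge> 0"
  using op_ge[of n "\<lambda>j. 0" m X] vn_nonneg[of m] by (smt (verit) vn_zero)

lemma op_le: fixes X :: "nat \<Rightarrow> nat \<Rightarrow> 'a::real_normed_field"
  assumes "\<And>v. vec_norm2 m (\<lambda>i. \<Sum>j<n. X i j * v j) \<le> c * vec_norm2 n v" "c \<ge> 0"
  shows "op_norm m n X \<le> c"
  unfolding op_norm_def
proof (rule cSup_least)
  show "{vec_norm2 m (\<lambda>i. \<Sum>j<n. X i j * v j) |v. vec_norm2 n v \<le> 1} \<noteq> {}"
  proof -
    have "vec_norm2 m (\<lambda>i. \<Sum>j<n. X i j * (\<lambda>j. 0::'a) j) \<in> {vec_norm2 m (\<lambda>i. \<Sum>j<n. X i j * v j) |v. vec_norm2 n v \<le> 1}"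
      using vn_zero[where 'a='a and n=n] by (intro CollectI exI[where x="\<lambda>j. 0"]) simp
    then show ?thesis by blast
  qed
next
  fix x assume "x \<in> {vec_norm2 m (\<lambda>i. \<Sum>j<n. X i j * v j) |v. vec_norm2 n v \<le> 1}"
  then obtain v where "vec_norm2 n v \<le> 1" "x = vec_norm2 m (\<lambda>i. \<Sum>j<n. X i j * v j)" by auto
  with assms(1)[of v] assms(2) show "x \<le> c"
    by (smt (verit) mult_left_le)
qed

lemma op_mul: fixes X :: "nat \<Rightarrow> nat \<Rightarrow> 'a::real_normed_field"
  shows "vec_norm2 m (\<lambda>i. \<Sum>j<n. X i j * v j) \<le> op_norm m n X * vec_norm2 n v"
proof (cases "vec_norm2 n v = 0")
  case True
  then have "(\<Sum>j<n. (norm (v j))^2) = 0" using vn_sq[of n v] by simp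
  then have "\<forall>j\<in>{..<n}. (norm (v j))^2 = 0" by (subst (asm) sum_nonneg_eq_0_iff) auto
  then have "\<forall>j<n. v j = 0" by simp
  then have "(\<lambda>i. \<Sum>j<n. X i j * v j) = (\<lambda>i. 0)" by auto
  then show ?thesis using True by (simp add: vec_norm2_def)
next
  case False
  define N where "N = vec_norm2 n v"
  have Npos: "N > 0" using False vn_nonneg[of n v] N_def by auto
  define w where "w = (\<lambda>j. of_real (1/N) * v j :: 'a)"
  have "vec_norm2 n w = 1" unfolding w_def vn_scale using Npos N_def by (simp add: norm_divide)
  then have "vec_norm2 m (\<lambda>i. \<Sum>j<n. X i j * w j) \<le> op_norm m n X" by (intro op_ge) auto
  moreover have "(\<lambda>i. \<Sum>j<n. X i j * w j) = (\<lambda>i. of_real (1/N) * (\<Sum>j<n. X i j * v j))"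
    unfolding w_def by (simp add: sum_distrib_left mult_ac)
  ultimately have "vec_norm2 m (\<lambda>i. of_real (1/N) * (\<Sum>j<n. X i j * v j)) \<le> op_norm m n X"
    by (simp only:)
  moreover have "norm (of_real (1/N) :: 'a) = 1/N" using Npos by (simp add: norm_divide)
  ultimately have "(1/N) * vec_norm2 m (\<lambda>i. \<Sum>j<n. X i j * v j) \<le> op_norm m n X"
    by (simp only: vn_scale)
  then show ?thesis using Npos N_def by (simp add: field_simps)
qed

lemma op_gt: fixes X :: "nat \<Rightarrow> nat \<Rightarrow> 'a::real_normed_field"
  assumes "vec_norm2 m (\<lambda>i. \<Sum>j<n. X i j * v j) > c * vec_norm2 n v"
  shows "op_norm m n X > c"
proof -
  have "c * vec_norm2 n v < op_norm m n X * vec_norm2 n v" using assms op_mul[where X=X and v=v and m=m and n=n] by linarith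
  then show ?thesis using vn_nonneg[of n v]
    by (smt (verit) mult_right_mono)
qed

lemma fact_op: fixes A X a b :: "nat \<Rightarrow> nat \<Rightarrow> 'a::real_normed_field"
  assumes A: "\<And>i j. i<m \<Longrightarrow> j<n \<Longrightarrow> A i j = (\<Sum>k<r. a i k * b j k)"
    and P: "\<And>i. i<m \<Longrightarrow> (\<Sum>k<r. (norm (a i k))^2) \<le> P"
    and Q: "\<And>j. j<n \<Longrightarrow> (\<Sum>k<r. (norm (b j k))^2) \<le> Q"
    and P0: "P \<ge> 0" and Q0: "Q \<ge> 0" and X: "op_norm m n X \<le> 1"
  shows "op_norm m n (\<lambda>i j. A i j * X i j) \<le> sqrt (P*Q)"
proof (rule op_le)
  fix v :: "nat \<Rightarrow> 'a"
  define u where "u k i = (\<Sum>j<n. X i j * (b j k * v j))" for k i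
  have e: "(\<Sum>j<n. A i j * X i j * v j) = (\<Sum>k<r. a i k * u k i)" if "i<m" for i
  proof -
    have "(\<Sum>j<n. A i j * X i j * v j) = (\<Sum>j<n. \<Sum>k<r. a i k * (X i j * (b j k * v j)))"
      by (rule sum.cong) (auto simp: A that sum_distrib_left sum_distrib_right mult_ac)
    also have "\<dots> = (\<Sum>k<r. \<Sum>j<n. a i k * (X i j * (b j k * v j)))" by (rule sum.swap)
    also have "\<dots> = (\<Sum>k<r. a i k * u k i)" by (simp add: u_def sum_distrib_left)
    finally show ?thesis .
  qed
  have "(\<Sum>i<m. (norm (\<Sum>j<n. A i j * X i j * v j))^2) \<le> (\<Sum>i<m. P * (\<Sum>k<r. (norm (u k i))^2))"
  proof (rule sum_mono)
    fix i assume "i \<in> {..<m}"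
    then have im: "i < m" by simp
    have "(norm (\<Sum>j<n. A i j * X i j * v j))^2 = (norm (\<Sum>k<r. a i k * u k i))^2" using e[OF im] by simp
    also have "\<dots> \<le> (\<Sum>k<r. (norm (a i k))^2) * (\<Sum>k<r. (norm (u k i))^2)" by (rule CSN)
    also have "\<dots> \<le> P * (\<Sum>k<r. (norm (u k i))^2)"
      using P[OF im] by (intro mult_right_mono sum_nonneg) auto
    finally show "(norm (\<Sum>j<n. A i j * X i j * v j))^2 \<le> P * (\<Sum>k<r. (norm (u k i))^2)" .
  qed
  also have "\<dots> = P * (\<Sum>k<r. (vec_norm2 m (u k))^2)"
    by (simp add: vn_sq sum_distrib_left sum.swap[of _ "{..<m}"])
  also have "\<dots> \<le> P * (\<Sum>k<r. (vec_norm2 n (\<lambda>j. b j k * v j))^2)"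
  proof (intro mult_left_mono sum_mono P0)
    fix k
    have "vec_norm2 m (u k) \<le> op_norm m n X * vec_norm2 n (\<lambda>j. b j k * v j)"
      unfolding u_def by (rule op_mul)
    also have "\<dots> \<le> 1 * vec_norm2 n (\<lambda>j. b j k * v j)"
      using X vn_nonneg by (intro mult_right_mono) auto
    finally show "(vec_norm2 m (u k))^2 \<le> (vec_norm2 n (\<lambda>j. b j k * v j))^2"
      using vn_nonneg by (intro power_mono) auto
  qed
  also have "\<dots> = P * (\<Sum>j<n. (norm (v j))^2 * (\<Sum>k<r. (norm (b j k))^2))"
    by (simp add: vn_sq norm_mult power_mult_distrib sum_distrib_left mult_ac sum.swap[of _ "{..<r}"])
  also have "\<dots> \<le> P * (\<Sum>j<n. (norm (v j))^2 * Q)"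
    using Q by (intro mult_left_mono sum_mono P0 mult_left_mono) auto
  also have "\<dots> = (sqrt (P*Q))^2 * (\<Sum>j<n. (norm (v j))^2)"
    using P0 Q0 by (simp add: sum_distrib_left sum_distrib_right mult_ac)
  finally show "vec_norm2 m (\<lambda>i. \<Sum>j<n. A i j * X i j * v j) \<le> sqrt (P*Q) * vec_norm2 n v"
    by (intro vn_le_sq) (use P0 Q0 in auto)
qed (use P0 Q0 in auto)

lemma op_zero: "op_norm m n (\<lambda>i j. 0 :: 'a::real_normed_field) \<le> 1"
proof -
  have "op_norm m n (\<lambda>i j. 0 :: 'a) \<le> 0"
    by (rule op_le) (simp_all add: vec_norm2_def)
  then show ?thesis by simp
qed

lemma schur_le: fixes A a b :: "nat \<Rightarrow> nat \<Rightarrow> 'a::real_normed_field"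
  assumes A: "\<And>i j. i<m \<Longrightarrow> j<n \<Longrightarrow> A i j = (\<Sum>k<r. a i k * b j k)"
    and P: "\<And>i. i<m \<Longrightarrow> (\<Sum>k<r. (norm (a i k))^2) \<le> P"
    and Q: "\<And>j. j<n \<Longrightarrow> (\<Sum>k<r. (norm (b j k))^2) \<le> Q"
    and P0: "P \<ge> 0" and Q0: "Q \<ge> 0"
  shows "schur_norm m n A \<le> sqrt (P*Q)"
  unfolding schur_norm_def
proof (rule cSup_least)
  show "{op_norm m n (\<lambda>i j. A i j * X i j) |X. op_norm m n X \<le> 1} \<noteq> {}"
    using op_zero[where 'a='a and m=m and n=n] by blast
next
  fix x assume "x \<in> {op_norm m n (\<lambda>i j. A i j * X i j) |X. op_norm m n X \<le> 1}"
  then obtain X where "op_norm m n X \<le> 1" "x = op_norm m n (\<lambda>i j. A i j * X i j)" by auto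
  then show "x \<le> sqrt (P*Q)" using fact_op[OF A P Q P0 Q0] by auto
qed

lemma schur_ge: fixes A X :: "nat \<Rightarrow> nat \<Rightarrow> 'a::real_normed_field"
  assumes X: "op_norm m n X \<le> 1"
  shows "op_norm m n (\<lambda>i j. A i j * X i j) \<le> schur_norm m n A"
  unfolding schur_norm_def
proof (rule cSup_upper)
  show "op_norm m n (\<lambda>i j. A i j * X i j) \<in> {op_norm m n (\<lambda>i j. A i j * X i j) |X. op_norm m n X \<le> 1}"
    using X by blast
  define PP where "PP = (\<Sum>i<m. \<Sum>k<n. (norm (A i k))^2)"
  have bnd: "op_norm m n (\<lambda>i j. A i j * Y i j) \<le> sqrt (PP * 1)" if "op_norm m n Y \<le> 1" for Y
  proof (rule fact_op[where a=A and b="\<lambda>j k. if j = k then 1 else 0" and r=n])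
    show "A i j = (\<Sum>k<n. A i k * (if j = k then 1 else 0))" if "j < n" for i j
      using that by (simp add: if_distrib cong: if_cong)
    show "(\<Sum>k<n. (norm (A i k))^2) \<le> PP" if "i < m" for i
      unfolding PP_def using that
      by (intro member_le_sum[where f="\<lambda>i. \<Sum>k<n. (norm (A i k))^2"]) (auto intro: sum_nonneg)
    show "(\<Sum>k<n. (norm (if j = k then 1 else 0::'a))^2) \<le> 1" if "j < n" for j
    proof -
      have "(\<Sum>k<n. (norm (if j = k then 1 else 0::'a))^2) = (\<Sum>k<n. (if j = k then 1 else 0::real))"
        by (intro sum.cong) auto
      then show ?thesis using that by simp
    qed
    show "PP \<ge> 0" unfolding PP_def by (intro sum_nonneg) auto
  qed (use that in auto)
  show "bdd_above {op_norm m n (\<lambda>i j. A i j * X i j) |X. op_norm m n X \<le> 1}"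
    using bnd by (intro bdd_aboveI[where M="sqrt (PP*1)"]) auto
qed

lemma ortho_op: fixes xr :: "nat \<Rightarrow> nat \<Rightarrow> real"
  assumes O: "\<And>j l. j<n \<Longrightarrow> l<n \<Longrightarrow> (\<Sum>i<n. xr i j * xr i l) = (if j = l then 1 else 0)"
  shows "op_norm n n (\<lambda>i j. of_real (xr i j) :: 'a::{real_normed_field,real_inner}) \<le> 1"
proof (rule op_le)
  fix v :: "nat \<Rightarrow> 'a"
  have "(\<Sum>i<n. (norm (\<Sum>j<n. of_real (xr i j) * v j))^2)
      = (\<Sum>i<n. inner (\<Sum>j<n. xr i j *\<^sub>R v j) (\<Sum>l<n. xr i l *\<^sub>R v l))"
    by (simp add: power2_norm_eq_inner scaleR_conv_of_real)
  also have "\<dots> = (\<Sum>i<n. \<Sum>j<n. \<Sum>l<n. (xr i j * xr i l) * inner (v j) (v l))"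
    by (simp only: inner_sum_left) (simp add: inner_sum_right sum_distrib_left mult_ac)
  also have "\<dots> = (\<Sum>j<n. \<Sum>i<n. \<Sum>l<n. (xr i j * xr i l) * inner (v j) (v l))"
    by (rule sum.swap)
  also have "\<dots> = (\<Sum>j<n. \<Sum>l<n. \<Sum>i<n. (xr i j * xr i l) * inner (v j) (v l))"
    by (rule sum.cong[OF refl], rule sum.swap)
  also have "\<dots> = (\<Sum>j<n. \<Sum>l<n. (\<Sum>i<n. xr i j * xr i l) * inner (v j) (v l))"
    by (simp only: sum_distrib_right)
  also have "\<dots> = (\<Sum>j<n. \<Sum>l<n. (if j = l then 1 else 0) * inner (v j) (v l))"
    by (intro sum.cong refl) (simp add: O)
  also have "\<dots> = (\<Sum>j<n. \<Sum>l<n. if j = l then inner (v j) (v l) else 0)"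
    by (intro sum.cong refl) simp
  also have "\<dots> = (\<Sum>j<n. (norm (v j))^2)"
    by (simp add: power2_norm_eq_inner)
  finally show "vec_norm2 n (\<lambda>i. \<Sum>j<n. of_real (xr i j) * v j) \<le> 1 * vec_norm2 n v"
    by (intro vn_le_sq) auto
qed simp



lemma less4: "(i::nat) < 4 \<longleftrightarrow> i = 0 \<or> i = 1 \<or> i = 2 \<or> i = 3" by auto

lemma sum4: "(\<Sum>k<4. f k) = f 0 + f 1 + f 2 + f (3::nat)"
  by (simp add: eval_nat_numeral)

lemma vn_ofreal: fixes M :: "nat \<Rightarrow> nat \<Rightarrow> 'a::real_normed_field"
  assumes "\<And>i j. i<m \<Longrightarrow> j<n \<Longrightarrow> M i j = of_real (Mr i j)"
  shows "vec_norm2 m (\<lambda>i. \<Sum>j<n. M i j * of_real (vr j)) = sqrt (\<Sum>i<m. (\<Sum>j<n. Mr i j * vr j)^2)"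
proof -
  have "(\<Sum>i<m. (norm (\<Sum>j<n. M i j * of_real (vr j)))^2) = (\<Sum>i<m. (\<Sum>j<n. Mr i j * vr j)^2)"
  proof (rule sum.cong[OF refl])
    fix i assume "i \<in> {..<m}"
    then have "(\<Sum>j<n. M i j * of_real (vr j)) = (\<Sum>j<n. of_real (Mr i j * vr j))"
      using assms by (intro sum.cong) auto
    also have "\<dots> = of_real (\<Sum>j<n. Mr i j * vr j)" by (simp only: of_real_sum)
    finally have "(\<Sum>j<n. M i j * of_real (vr j)) = of_real (\<Sum>j<n. Mr i j * vr j)" .
    then show "(norm (\<Sum>j<n. M i j * of_real (vr j)))^2 = (\<Sum>j<n. Mr i j * vr j)^2" by (metis norm_of_real power2_abs)
  qed
  then show ?thesis unfolding vec_norm2_def by simp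
qed

lemma vn_ofreal_vec: "vec_norm2 n (\<lambda>j. of_real (vr j) :: 'a::real_normed_field) = sqrt (\<Sum>j<n. (vr j)^2)"
  unfolding vec_norm2_def by simp

definition "XL = [[181,-200,740,-1240],[-200,781,-980,-740],[-740,980,781,200],[1240,740,200,181::real]]"
definition "xr i j = mat_of_rows XL i j / 1469"
definition "vr j = [5,10,-5,-7::real] ! j"

lemma xr_ortho: "j<4 \<Longrightarrow> l<4 \<Longrightarrow> (\<Sum>i<4. xr i j * xr i l) = (if j = l then 1 else 0)"
  unfolding less4 by (auto simp: sum4 xr_def mat_of_rows_def XL_def)

lemma A_ofreal: "i<4 \<Longrightarrow> j<4 \<Longrightarrow>
  (mat_of_rows [[0,0,0,1],[0,1,1,1],[0,1,0,0],[1,1,0,0]] i j :: 'a::real_normed_field)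
  = of_real (mat_of_rows [[0,0,0,1],[0,1,1,1],[0,1,0,0],[1,1,0,0]] i j)"
  unfolding less4 by (auto simp: mat_of_rows_def)

lemma A_lower: "schur_norm 4 4 (mat_of_rows [[0,0,0,1],[0,1,1,1],[0,1,0,0],[1,1,0,0]] :: nat \<Rightarrow> nat \<Rightarrow> 'a::{real_normed_field,real_inner}) > 5/4"
proof -
  let ?A = "mat_of_rows [[0,0,0,1],[0,1,1,1],[0,1,0,0],[1,1,0,0]] :: nat \<Rightarrow> nat \<Rightarrow> 'a"
  let ?Ar = "mat_of_rows [[0,0,0,1],[0,1,1,1],[0,1,0,0],[1,1,0,0]] :: nat \<Rightarrow> nat \<Rightarrow> real"
  let ?X = "\<lambda>i j. of_real (xr i j) :: 'a"
  have opX: "op_norm 4 4 ?X \<le> 1" by (rule ortho_op) (rule xr_ortho)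
  have S1: "(\<Sum>i<4. (\<Sum>j<4. (?Ar i j * xr i j) * vr j)^2) = 676394500 / 2157961" 
    by (simp add: sum4 xr_def mat_of_rows_def XL_def vr_def power2_eq_square)
  have S2: "(\<Sum>j<4. (vr j)^2) = 199" by (simp add: sum4 vr_def)
  have "vec_norm2 4 (\<lambda>i. \<Sum>j<4. (?A i j * ?X i j) * of_real (vr j)) = sqrt (\<Sum>i<4. (\<Sum>j<4. (?Ar i j * xr i j) * vr j)^2)"
    by (rule vn_ofreal) (simp add: A_ofreal[where 'a='a])
  moreover have "vec_norm2 4 (\<lambda>j. of_real (vr j) :: 'a) = sqrt 199"
    using S2 by (simp add: vn_ofreal_vec)
  moreover have "5/4 * sqrt 199 < sqrt (676394500 / 2157961)"
  proof (rule power2_less_imp_less)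
    show "(5/4 * sqrt 199)^2 < (sqrt (676394500 / 2157961))^2"
      by (simp add: power_divide power_mult_distrib)
  qed simp
  ultimately have "vec_norm2 4 (\<lambda>i. \<Sum>j<4. (?A i j * ?X i j) * of_real (vr j)) > 5/4 * vec_norm2 4 (\<lambda>j. of_real (vr j) :: 'a)"
    using S1 by simp
  then have "op_norm 4 4 (\<lambda>i j. ?A i j * ?X i j) > 5/4" by (rule op_gt)
  also have "op_norm 4 4 (\<lambda>i j. ?A i j * ?X i j) \<le> schur_norm 4 4 ?A" using opX by (rule schur_ge)
  finally show ?thesis .
qed

definition "RL = [[21,-10,-5,-1],[14,0,19,-5],[7,19,8,10],[7,18,-12,-7::real]]"
definition "CL = [[7807, 9640, 4555, 4186], [-3857, -2968, 4956, 9793], [-4347, 3409, 8764, -2471], [5341, -3836, 2275, 2331::real]]"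

lemma B_fact: "i<4 \<Longrightarrow> j<4 \<Longrightarrow>
  (mat_of_rows [[1,1,0,0],[0,1,1,0],[0,0,1,1],[0,0,0,1]] i j :: 'a::real_normed_field)
  = (\<Sum>k<4. of_real (mat_of_rows RL i k) * of_real (mat_of_rows CL k j / 218911))"
  unfolding less4 by (auto simp: sum4 mat_of_rows_def RL_def CL_def)

lemma B_upper: "schur_norm 4 4 (mat_of_rows [[1,1,0,0],[0,1,1,0],[0,0,1,1],[0,0,0,1]] :: nat \<Rightarrow> nat \<Rightarrow> 'a::real_normed_field) \<le> 5/4"
proof -
  have "schur_norm 4 4 (mat_of_rows [[1,1,0,0],[0,1,1,0],[0,0,1,1],[0,0,0,1]] :: nat \<Rightarrow> nat \<Rightarrow> 'a) \<le> sqrt (582 * (25/9312))"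
  proof (rule schur_le[where r=4 and a="\<lambda>i k. of_real (mat_of_rows RL i k)" and b="\<lambda>j k. of_real (mat_of_rows CL k j / 218911)"])
    show "(mat_of_rows [[1,1,0,0],[0,1,1,0],[0,0,1,1],[0,0,0,1]] i j :: 'a) = (\<Sum>k<4. of_real (mat_of_rows RL i k) * of_real (mat_of_rows CL k j / 218911))"
      if "i<4" "j<4" for i j using that by (rule B_fact)
    show "(\<Sum>k<4. (norm (of_real (mat_of_rows RL i k) :: 'a))^2) \<le> 582" if "i<4" for i
      using that unfolding less4 by (auto simp: sum4 mat_of_rows_def RL_def)
    show "(\<Sum>k<4. (norm (of_real (mat_of_rows CL k j / 218911) :: 'a))^2) \<le> 25/9312" if "j<4" for j
      using that unfolding less4 by (auto simp: sum4 mat_of_rows_def CL_def power2_eq_square)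
  qed auto
  also have "sqrt (582 * (25/9312)) = 5/4"
    by (simp add: real_sqrt_divide)
  finally show ?thesis .
qed


theorem proposition5p7:
  shows "schur_norm 4 4 (mat_of_rows [[0,0,0,1],[0,1,1,1],[0,1,0,0],[1,1,0,0]] :: nat \<Rightarrow> nat \<Rightarrow> real)
           > schur_norm 4 4 (mat_of_rows [[1,1,0,0],[0,1,1,0],[0,0,1,1],[0,0,0,1]] :: nat \<Rightarrow> nat \<Rightarrow> real)
       \<and> schur_norm 4 4 (mat_of_rows [[0,0,0,1],[0,1,1,1],[0,1,0,0],[1,1,0,0]] :: nat \<Rightarrow> nat \<Rightarrow> complex)
           > schur_norm 4 4 (mat_of_rows [[1,1,0,0],[0,1,1,0],[0,0,1,1],[0,0,0,1]] :: nat \<Rightarrow> nat \<Rightarrow> complex)"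
  proof
  show "schur_norm 4 4 (mat_of_rows [[0,0,0,1],[0,1,1,1],[0,1,0,0],[1,1,0,0]] :: nat \<Rightarrow> nat \<Rightarrow> real)
           > schur_norm 4 4 (mat_of_rows [[1,1,0,0],[0,1,1,0],[0,0,1,1],[0,0,0,1]] :: nat \<Rightarrow> nat \<Rightarrow> real)"
    using A_lower[where 'a=real] B_upper[where 'a=real] by linarith
  show "schur_norm 4 4 (mat_of_rows [[0,0,0,1],[0,1,1,1],[0,1,0,0],[1,1,0,0]] :: nat \<Rightarrow> nat \<Rightarrow> complex)
           > schur_norm 4 4 (mat_of_rows [[1,1,0,0],[0,1,1,0],[0,0,1,1],[0,0,0,1]] :: nat \<Rightarrow> nat \<Rightarrow> complex)"
    using A_lower[where 'a=complex] B_upper[where 'a=complex] by linarith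
qed

end
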